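(* (i) If a predominated graph $(G,D)$ is MBD Dominator-critical and $D'\subseteq V(G)$ is a proper subset or a proper superset of $D$, then $(G,D')$ is not MBD Dominator-critical. (ii) For a graph $G$, there exists $D\subseteq V(G)$ such that $(G,D)$ is MBD Dominator-critical if and only if Staller wins the MBD game on $(G,\emptyset)$.
   Context: A predominated graph is a pair $(G,D)$ with $G$ a finite simple graph and $D\subseteq V(G)$. In the MBD game on $(G,D)$, Staller and Dominator alternately claim unclaimed vertices of $V(G)$ (including vertices of $D$), Staller first, until all are claimed; Staller wins if she claims all of $N_G[v]$ for some $v\in V(G)\setminus D$, Dominator wins otherwise. $(G,D)$ is MBD Dominator-critical if $D\neq\emptyset$, Dominator wins on $(G,D)$, and Staller wins on $(G,D\setminus\{v\})$ for every $v\in D$. *)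

theory Defs
  imports Main
begin

definition simple_graph :: "'a set \<Rightarrow> ('a \<Rightarrow> 'a \<Rightarrow> bool) \<Rightarrow> bool" where
  "simple_graph V E \<longleftrightarrow> finite V \<and> (\<forall>u v. E u v \<longrightarrow> u \<in> V \<and> v \<in> V)
     \<and> (\<forall>u v. E u v \<longrightarrow> E v u) \<and> (\<forall>v. \<not> E v v)"

definition closed_nbhd :: "'a set \<Rightarrow> ('a \<Rightarrow> 'a \<Rightarrow> bool) \<Rightarrow> 'a \<Rightarrow> 'a set" where
  "closed_nbhd V E v = insert v {u \<in> V. E v u}"

definition staller_claimed_nbhd :: "'a set \<Rightarrow> ('a \<Rightarrow> 'a \<Rightarrow> bool) \<Rightarrow> 'a set \<Rightarrow> 'a set \<Rightarrow> bool" where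
  "staller_claimed_nbhd V E D S \<longleftrightarrow> (\<exists>v \<in> V - D. closed_nbhd V E v \<subseteq> S)"

text \<open>mbd_sw n V E D S T st: Staller has a winning strategy from the position where
  Staller has claimed S, Dominator has claimed T, and it is Staller's turn iff st;
  n is a fuel bound (at least the number of unclaimed vertices).\<close>
fun mbd_sw :: "nat \<Rightarrow> 'a set \<Rightarrow> ('a \<Rightarrow> 'a \<Rightarrow> bool) \<Rightarrow> 'a set \<Rightarrow> 'a set \<Rightarrow> 'a set \<Rightarrow> bool \<Rightarrow> bool" where
  "mbd_sw 0 V E D S T st = staller_claimed_nbhd V E D S"
| "mbd_sw (Suc n) V E D S T st =
     (if V - S - T = {} then staller_claimed_nbhd V E D S
      else if st then (\<exists>u \<in> V - S - T. mbd_sw n V E D (insert u S) T False)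
      else (\<forall>u \<in> V - S - T. mbd_sw n V E D S (insert u T) True))"

definition mbd_staller_wins :: "'a set \<Rightarrow> ('a \<Rightarrow> 'a \<Rightarrow> bool) \<Rightarrow> 'a set \<Rightarrow> bool" where
  "mbd_staller_wins V E D = mbd_sw (card V) V E D {} {} True"

text \<open>The game is finite with no draws, so Dominator wins iff Staller does not.\<close>
definition mbd_dominator_wins :: "'a set \<Rightarrow> ('a \<Rightarrow> 'a \<Rightarrow> bool) \<Rightarrow> 'a set \<Rightarrow> bool" where
  "mbd_dominator_wins V E D \<longleftrightarrow> \<not> mbd_staller_wins V E D"

definition mbd_dominator_critical :: "'a set \<Rightarrow> ('a \<Rightarrow> 'a \<Rightarrow> bool) \<Rightarrow> 'a set \<Rightarrow> bool" where
  "mbd_dominator_critical V E D \<longleftrightarrow> D \<subseteq> V \<and> D \<noteq> {} \<and> mbd_dominator_wins V E D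
     \<and> (\<forall>v \<in> D. mbd_staller_wins V E (D - {v}))"

end

theory Submission
  imports Defs
begin

lemma sw_mono:
  "mbd_sw n V E D2 S T st \<Longrightarrow> D1 \<subseteq> D2 \<Longrightarrow> mbd_sw n V E D1 S T st"
proof (induction n arbitrary: S T st)
  case 0
  then show ?case by (auto simp: staller_claimed_nbhd_def)
next
  case (Suc n)
  show ?case
  proof (cases "V - S - T = {}")
    case True
    then show ?thesis using Suc.prems by (auto simp: staller_claimed_nbhd_def)
  next
    case False
    show ?thesis
    proof (cases st)
      case True
      then obtain u where "u \<in> V - S - T" "mbd_sw n V E D2 (insert u S) T False"
        using Suc.prems False by auto
      then show ?thesis using Suc.IH[OF _ Suc.prems(2)] False True by auto
    next
      case f: False
      then show ?thesis using Suc.IH[OF _ Suc.prems(2)] Suc.prems(1) False by auto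
    qed
  qed
qed

lemma win_mono:
  "mbd_staller_wins V E D2 \<Longrightarrow> D1 \<subseteq> D2 \<Longrightarrow> mbd_staller_wins V E D1"
  unfolding mbd_staller_wins_def using sw_mono by blast

lemma dom_V: "\<not> mbd_staller_wins V E V"
proof -
  have "\<not> mbd_sw n V E V S T st" for n S T st
    by (induction n arbitrary: S T st) (auto simp: staller_claimed_nbhd_def)
  then show ?thesis unfolding mbd_staller_wins_def by blast
qed

theorem mainTheorem13:
  fixes V :: "'a set" and E :: "'a \<Rightarrow> 'a \<Rightarrow> bool"
  assumes "simple_graph V E"
  shows "(\<forall>D D'. mbd_dominator_critical V E D \<and> D' \<subseteq> V \<and> (D' \<subset> D \<or> D \<subset> D')
            \<longrightarrow> \<not> mbd_dominator_critical V E D')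
       \<and> ((\<exists>D \<subseteq> V. mbd_dominator_critical V E D) \<longleftrightarrow> mbd_staller_wins V E {})"
proof (intro conjI allI impI)
  fix D D'
  assume h: "mbd_dominator_critical V E D \<and> D' \<subseteq> V \<and> (D' \<subset> D \<or> D \<subset> D')"
  show "\<not> mbd_dominator_critical V E D'"
  proof
    assume c: "mbd_dominator_critical V E D'"
    from h have "D' \<subset> D \<or> D \<subset> D'" by blast
    then show False
    proof
      assume "D' \<subset> D"
      then obtain v where v: "v \<in> D" "v \<notin> D'" by blast
      then have "D' \<subseteq> D - {v}" using \<open>D' \<subset> D\<close> by blast
      moreover have "mbd_staller_wins V E (D - {v})" using h v
        unfolding mbd_dominator_critical_def by blast
      ultimately show False using c win_mono
        unfolding mbd_dominator_critical_def mbd_dominator_wins_def by blast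
    next
      assume "D \<subset> D'"
      then obtain v where v: "v \<in> D'" "v \<notin> D" by blast
      then have "D \<subseteq> D' - {v}" using \<open>D \<subset> D'\<close> by blast
      moreover have "mbd_staller_wins V E (D' - {v})" using c v
        unfolding mbd_dominator_critical_def by blast
      ultimately show False using h win_mono
        unfolding mbd_dominator_critical_def mbd_dominator_wins_def by blast
    qed
  qed
next
  show "(\<exists>D \<subseteq> V. mbd_dominator_critical V E D) \<longleftrightarrow> mbd_staller_wins V E {}"
  proof
    assume "\<exists>D \<subseteq> V. mbd_dominator_critical V E D"
    then obtain D where "mbd_dominator_critical V E D" by blast
    then obtain v where "v \<in> D" "mbd_staller_wins V E (D - {v})"
      unfolding mbd_dominator_critical_def by blast
    then show "mbd_staller_wins V E {}" using win_mono by blast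
  next
    assume s: "mbd_staller_wins V E {}"
    have fin: "finite V" using assms unfolding simple_graph_def by blast
    let ?P = "\<lambda>D. D \<subseteq> V \<and> \<not> mbd_staller_wins V E D"
    have "?P V" using dom_V by blast
    then obtain D where D: "?P D" and mn: "\<And>D'. ?P D' \<Longrightarrow> card D \<le> card D'"
      using ex_has_least_nat[of ?P V card] by blast
    have fD: "finite D" using D fin finite_subset by blast
    have "D \<noteq> {}" using D s by blast
    moreover have "mbd_staller_wins V E (D - {v})" if "v \<in> D" for v
    proof (rule ccontr)
      assume "\<not> mbd_staller_wins V E (D - {v})"
      then have "card D \<le> card (D - {v})" using mn D by blast
      moreover have "card (D - {v}) < card D" using fD that by (metis card_Diff1_less)
      ultimately show False by simp
    qed
    ultimately have "mbd_dominator_critical V E D" using D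
      unfolding mbd_dominator_critical_def mbd_dominator_wins_def by blast
    then show "\<exists>D \<subseteq> V. mbd_dominator_critical V E D" using D by blast
  qed
qed

end
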